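(* Let $\mathfrak V$ be an abstract h-strong super operator space. Then for each $n$ there exist an (ungraded) Hilbert space $\mathcal H_n$ and a linear map $\nu:M_n(\mathfrak V)\to\mathcal B(\mathcal H_n)$ with $\nu(x^* )=\nu(x)^\dagger$ (ordinary adjoint) which is strongly contractive, i.e. $\sup_{\Vert\xi\Vert\le1}|\langle\nu(x)\xi,\xi\rangle|\le\Vert x\Vert^s_n$ for all $x\in M_n(\mathfrak V)$, and hermitian isometric, i.e. $\Vert\nu(x)\Vert=\Vert x\Vert^s_n$ for all $x\in M_n(\mathfrak V)$ with $x=x^*$.
   Context: Let $\mathfrak V$ be a complex vector space with an antilinear involution $v\mapsto v^*$; on $M_n(\mathfrak V)$ put $[x_{ij}]^*=[x_{ji}^*]$. A strong matrix norm is a sequence of norms $\Vert\cdot\Vert^s_n$ on $M_n(\mathfrak V)$ satisfying $(\Sigma M1)$: $\Vert x\oplus y\Vert^s_{n+m}=\max\{\Vert x\Vert^s_n,\Vert y\Vert^s_m\}$, and $(\Sigma M2)$: $\Vert\alpha x\overline\alpha\Vert^s_n\le\Vert\alpha\Vert^2\Vert x\Vert^s_r$ for $\alpha\in M_{n,r}(\mathbb C)$, $x\in M_r(\mathfrak V)$. The induced ordinary matrix norm is $\Vert x\Vert_n:=2\left\Vert\begin{pmatrix}0&x\\0&0\end{pmatrix}\right\Vert^s_{2n}$. An abstract h-strong super operator space is such a $\mathfrak V$ (a super operator space for the induced matrix norms) whose strong matrix norm satisfies $(\Sigma M1)$, $(\Sigma M2)$, for which the involution is strongly completely antiisometric ($\Vert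 x^*\Vert^s_n=\Vert x\Vert^s_n$ for all $n$ and $x\in M_n(\mathfrak V)$), and which satisfies $(h\Sigma M* )$: $\Vert x\Vert^s_n=2\left\Vert\begin{pmatrix}0&x\\0&0\end{pmatrix}\right\Vert^s_{2n}$ for every hermitian $x=x^*\in M_n(\mathfrak V)$. *)

theory Defs
  imports "HOL-Analysis.Analysis"
begin

text \<open>A matrix is a function of row and column index; an element of M_{n,m}
  is such a function vanishing outside the index range n x m.\<close>

type_synonym 'a mat = "nat \<Rightarrow> nat \<Rightarrow> 'a"

definition mats :: "nat \<Rightarrow> nat \<Rightarrow> ('a::zero) mat set" where
  "mats n m = {x. \<forall>i j. (n \<le> i \<or> m \<le> j) \<longrightarrow> x i j = 0}"

definition madd :: "('a::plus) mat \<Rightarrow> 'a mat \<Rightarrow> 'a mat" where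
  "madd x y = (\<lambda>i j. x i j + y i j)"

definition mscale :: "(complex \<Rightarrow> 'v \<Rightarrow> 'v) \<Rightarrow> complex \<Rightarrow> 'v mat \<Rightarrow> 'v mat" where
  "mscale smul c x = (\<lambda>i j. smul c (x i j))"

definition mstar :: "('v \<Rightarrow> 'v) \<Rightarrow> 'v mat \<Rightarrow> 'v mat" where
  "mstar st x = (\<lambda>i j. st (x j i))"

definition dsum :: "nat \<Rightarrow> nat \<Rightarrow> ('a::zero) mat \<Rightarrow> 'a mat \<Rightarrow> 'a mat" where
  "dsum n m x y = (\<lambda>i j.
     if i < n \<and> j < n then x i j
     else if n \<le> i \<and> i < n + m \<and> n \<le> j \<and> j < n + m then y (i - n) (j - n)
     else 0)"

text \<open>The 2n x 2n matrix [[0, x],[0, 0]] for x in M_n.\<close>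
definition corner :: "nat \<Rightarrow> ('a::zero) mat \<Rightarrow> 'a mat" where
  "corner n x = (\<lambda>i j. if i < n \<and> n \<le> j \<and> j < 2 * n then x i (j - n) else 0)"

definition cadj :: "complex mat \<Rightarrow> complex mat" where
  "cadj a = (\<lambda>i j. cnj (a j i))"

definition lmul :: "(complex \<Rightarrow> 'v::comm_monoid_add \<Rightarrow> 'v) \<Rightarrow> nat \<Rightarrow> complex mat \<Rightarrow> 'v mat \<Rightarrow> 'v mat" where
  "lmul smul r a x = (\<lambda>i j. \<Sum>k<r. smul (a i k) (x k j))"

definition rmul :: "(complex \<Rightarrow> 'v::comm_monoid_add \<Rightarrow> 'v) \<Rightarrow> nat \<Rightarrow> 'v mat \<Rightarrow> complex mat \<Rightarrow> 'v mat" where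
  "rmul smul r x b = (\<lambda>i j. \<Sum>k<r. smul (b k j) (x i k))"

definition cmat_norm :: "nat \<Rightarrow> nat \<Rightarrow> complex mat \<Rightarrow> real" where
  "cmat_norm n r a = Sup {sqrt (\<Sum>i<n. (cmod (\<Sum>k<r. a i k * v k))\<^sup>2) | v.
                           (\<Sum>k<r. (cmod (v k))\<^sup>2) \<le> 1}"

definition is_norm_on :: "(complex \<Rightarrow> 'v::ab_group_add \<Rightarrow> 'v) \<Rightarrow> 'v mat set \<Rightarrow> ('v mat \<Rightarrow> real) \<Rightarrow> bool" where
  "is_norm_on smul S N \<longleftrightarrow>
     (\<forall>x\<in>S. 0 \<le> N x \<and> (N x = 0 \<longleftrightarrow> x = (\<lambda>i j. 0))) \<and>
     (\<forall>x\<in>S. \<forall>y\<in>S. N (madd x y) \<le> N x + N y) \<and>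
     (\<forall>c. \<forall>x\<in>S. N (mscale smul c x) = cmod c * N x)"

definition antilinear_involution :: "(complex \<Rightarrow> 'v::ab_group_add \<Rightarrow> 'v) \<Rightarrow> ('v \<Rightarrow> 'v) \<Rightarrow> bool" where
  "antilinear_involution smul st \<longleftrightarrow>
     (\<forall>u v. st (u + v) = st u + st v) \<and>
     (\<forall>c v. st (smul c v) = smul (cnj c) (st v)) \<and>
     (\<forall>v. st (st v) = v)"

definition strong_matrix_norm :: "(complex \<Rightarrow> 'v::ab_group_add \<Rightarrow> 'v) \<Rightarrow> (nat \<Rightarrow> 'v mat \<Rightarrow> real) \<Rightarrow> bool" where
  "strong_matrix_norm smul sn \<longleftrightarrow>
     (\<forall>n. is_norm_on smul (mats n n) (sn n)) \<and>
     (\<forall>n m x y. x \<in> mats n n \<longrightarrow> y \<in> mats m m \<longrightarrow>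
        sn (n + m) (dsum n m x y) = max (sn n x) (sn m y)) \<and>
     (\<forall>n r a x. a \<in> mats n r \<longrightarrow> x \<in> mats r r \<longrightarrow>
        sn n (rmul smul r (lmul smul r a x) (cadj a)) \<le> (cmat_norm n r a)\<^sup>2 * sn r x)"

definition induced_norm :: "(nat \<Rightarrow> 'v::zero mat \<Rightarrow> real) \<Rightarrow> nat \<Rightarrow> 'v mat \<Rightarrow> real" where
  "induced_norm sn n x = 2 * sn (2 * n) (corner n x)"

definition ruan_matrix_norm :: "(complex \<Rightarrow> 'v::ab_group_add \<Rightarrow> 'v) \<Rightarrow> (nat \<Rightarrow> 'v mat \<Rightarrow> real) \<Rightarrow> bool" where
  "ruan_matrix_norm smul N \<longleftrightarrow>
     (\<forall>n. is_norm_on smul (mats n n) (N n)) \<and>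
     (\<forall>n m x y. x \<in> mats n n \<longrightarrow> y \<in> mats m m \<longrightarrow>
        N (n + m) (dsum n m x y) = max (N n x) (N m y)) \<and>
     (\<forall>n r a x b. a \<in> mats n r \<longrightarrow> x \<in> mats r r \<longrightarrow> b \<in> mats r n \<longrightarrow>
        N n (rmul smul r (lmul smul r a x) b) \<le> cmat_norm n r a * N r x * cmat_norm r n b)"

definition h_strong_super_operator_space ::
  "(complex \<Rightarrow> 'v::ab_group_add \<Rightarrow> 'v) \<Rightarrow> ('v \<Rightarrow> 'v) \<Rightarrow> (nat \<Rightarrow> 'v mat \<Rightarrow> real) \<Rightarrow> bool" where
  "h_strong_super_operator_space smul st sn \<longleftrightarrow>
     vector_space smul \<and>
     antilinear_involution smul st \<and>
     strong_matrix_norm smul sn \<and>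
     ruan_matrix_norm smul (induced_norm sn) \<and>
     (\<forall>n x. x \<in> mats n n \<longrightarrow> sn n (mstar st x) = sn n x) \<and>
     (\<forall>n x. x \<in> mats n n \<longrightarrow> mstar st x = x \<longrightarrow> sn n x = induced_norm sn n x)"

text \<open>A complex Hilbert space is given by a carrier H, a linear subspace of the
  function space 'j => complex (pointwise operations), with an inner product
  ip, linear in the first and conjugate-linear in the second argument, which
  is complete for the induced norm.\<close>

definition hnorm :: "('h \<Rightarrow> 'h \<Rightarrow> complex) \<Rightarrow> 'h \<Rightarrow> real" where
  "hnorm ip x = sqrt (Re (ip x x))"

definition hilbert_space :: "('j \<Rightarrow> complex) set \<Rightarrow> (('j \<Rightarrow> complex) \<Rightarrow> ('j \<Rightarrow> complex) \<Rightarrow> complex) \<Rightarrow> bool" where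
  "hilbert_space H ip \<longleftrightarrow>
     (\<lambda>_. 0) \<in> H \<and>
     (\<forall>x\<in>H. \<forall>y\<in>H. (\<lambda>j. x j + y j) \<in> H) \<and>
     (\<forall>c. \<forall>x\<in>H. (\<lambda>j. c * x j) \<in> H) \<and>
     (\<forall>x\<in>H. \<forall>y\<in>H. \<forall>z\<in>H. ip (\<lambda>j. x j + y j) z = ip x z + ip y z) \<and>
     (\<forall>c. \<forall>x\<in>H. \<forall>y\<in>H. ip (\<lambda>j. c * x j) y = c * ip x y) \<and>
     (\<forall>x\<in>H. \<forall>y\<in>H. ip y x = cnj (ip x y)) \<and>
     (\<forall>x\<in>H. 0 \<le> Re (ip x x) \<and> (ip x x = 0 \<longleftrightarrow> x = (\<lambda>_. 0))) \<and>
     (\<forall>X. (\<forall>k. X k \<in> H) \<longrightarrow>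
          (\<forall>e>0. \<exists>N. \<forall>k\<ge>N. \<forall>l\<ge>N. hnorm ip (\<lambda>j. X k j - X l j) < e) \<longrightarrow>
          (\<exists>L\<in>H. (\<lambda>k. hnorm ip (\<lambda>j. X k j - L j)) \<longlonglongrightarrow> 0))"

definition bounded_op :: "('j \<Rightarrow> complex) set \<Rightarrow> (('j \<Rightarrow> complex) \<Rightarrow> ('j \<Rightarrow> complex) \<Rightarrow> complex)
     \<Rightarrow> (('j \<Rightarrow> complex) \<Rightarrow> ('j \<Rightarrow> complex)) \<Rightarrow> bool" where
  "bounded_op H ip T \<longleftrightarrow>
     (\<forall>x\<in>H. T x \<in> H) \<and>
     (\<forall>x\<in>H. \<forall>y\<in>H. T (\<lambda>j. x j + y j) = (\<lambda>j. T x j + T y j)) \<and>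
     (\<forall>c. \<forall>x\<in>H. T (\<lambda>j. c * x j) = (\<lambda>j. c * T x j)) \<and>
     (\<exists>K. \<forall>x\<in>H. hnorm ip (T x) \<le> K * hnorm ip x)"

definition op_norm :: "('j \<Rightarrow> complex) set \<Rightarrow> (('j \<Rightarrow> complex) \<Rightarrow> ('j \<Rightarrow> complex) \<Rightarrow> complex)
     \<Rightarrow> (('j \<Rightarrow> complex) \<Rightarrow> ('j \<Rightarrow> complex)) \<Rightarrow> real" where
  "op_norm H ip T = Sup {hnorm ip (T x) | x. x \<in> H \<and> hnorm ip x \<le> 1}"

end

theory Submission
  imports Defs "HOL-Library.Function_Algebras"
begin



locale rvs = vector_space scale for scale :: "real \<Rightarrow> 'b::ab_group_add \<Rightarrow> 'b"
begin

definition sublin :: "('b \<Rightarrow> real) \<Rightarrow> bool" where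
  "sublin q \<longleftrightarrow> (\<forall>x y. q (x + y) \<le> q x + q y) \<and> (\<forall>c x. c \<ge> 0 \<longrightarrow> q (scale c x) = c * q x)"

lemma sublin_0: "sublin q \<Longrightarrow> q 0 = 0"
  unfolding sublin_def by (metis mult_zero_left order_refl scale_zero_left)

lemma sublin_neg: assumes "sublin q" shows "- q (- x) \<le> q x"
proof -
  have "q (x + - x) \<le> q x + q (-x)" using assms unfolding sublin_def by blast
  then show ?thesis using sublin_0[OF assms] by simp
qed

lemma sublin_add: "sublin q \<Longrightarrow> q (x + y) \<le> q x + q y" unfolding sublin_def by blast
lemma sublin_hom: "sublin q \<Longrightarrow> c \<ge> 0 \<Longrightarrow> q (scale c x) = c * q x" unfolding sublin_def by blast

definition T :: "'b \<Rightarrow> ('b \<Rightarrow> real) \<Rightarrow> 'b \<Rightarrow> real" where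
  "T y q x = (INF t\<in>{0..}. q (x + scale t y) - t * q y)"

lemma T_bdd: assumes "sublin q"
  shows "bdd_below ((\<lambda>t. q (x + scale t y) - t * q y) ` {0..})"
proof (rule bdd_belowI2)
  fix t :: real assume "t \<in> {0..}"
  then have t: "t \<ge> 0" by simp
  have "q (scale t y) = q ((x + scale t y) + (- x))" by simp
  also have "\<dots> \<le> q (x + scale t y) + q (- x)" by (rule sublin_add[OF assms])
  finally show "- q (-x) \<le> q (x + scale t y) - t * q y"
    using sublin_hom[OF assms t] by simp
qed

lemma T_le: assumes "sublin q" "t \<ge> 0" shows "T y q x \<le> q (x + scale t y) - t * q y"
  unfolding T_def by (rule cINF_lower[OF T_bdd[OF assms(1)]]) (use assms in simp)

lemma T_ge: assumes "sublin q" shows "- q (- x) \<le> T y q x"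
  unfolding T_def
proof (rule cINF_greatest)
  fix t :: real assume "t \<in> {0..}"
  then have t: "t \<ge> 0" by simp
  have "q (scale t y) = q ((x + scale t y) + (- x))" by simp
  also have "\<dots> \<le> q (x + scale t y) + q (- x)" by (rule sublin_add[OF assms])
  finally show "- q (-x) \<le> q (x + scale t y) - t * q y"
    using sublin_hom[OF assms t] by simp
qed auto

lemma T_below: "sublin q \<Longrightarrow> T y q x \<le> q x"
  using T_le[of q 0 y x] by simp

lemma T_neg: "sublin q \<Longrightarrow> T y q (- y) \<le> - q y"
  using T_le[of q 1 y "- y"] sublin_0[of q] by simp

lemma T_sublin: assumes q: "sublin q" shows "sublin (T y q)"
  unfolding sublin_def
proof (intro conjI allI impI)
  fix x z
  have main: "T y q (x + z) \<le> (q (x + scale s y) - s * q y) + (q (z + scale t y) - t * q y)"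
    if s: "s \<ge> 0" and t: "t \<ge> 0" for s t
  proof -
    have "T y q (x + z) \<le> q (x + z + scale (s + t) y) - (s + t) * q y"
      using T_le[OF q] s t by simp
    also have "x + z + scale (s + t) y = (x + scale s y) + (z + scale t y)"
      by (simp add: scale_left_distrib algebra_simps)
    also have "q \<dots> \<le> q (x + scale s y) + q (z + scale t y)" by (rule sublin_add[OF q])
    finally show ?thesis by (simp add: algebra_simps)
  qed
  have "T y q (x + z) - (q (z + scale t y) - t * q y) \<le> T y q x" if t: "t \<ge> 0" for t
    unfolding T_def[of y q x]
  proof (rule cINF_greatest)
    fix s :: real assume "s \<in> {0..}"
    then have "s \<ge> 0" by simp
    from main[OF this t] show "T y q (x + z) - (q (z + scale t y) - t * q y) \<le> q (x + scale s y) - s * q y"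
      by linarith
  qed auto
  then have "T y q (x + z) - T y q x \<le> T y q z"
    unfolding T_def[of y q z]
    by (intro cINF_greatest) (auto simp: algebra_simps)
  then show "T y q (x + z) \<le> T y q x + T y q z" by simp
next
  fix c :: real and x assume c: "c \<ge> 0"
  show "T y q (scale c x) = c * T y q x"
  proof (cases "c = 0")
    case True
    have "T y q 0 = 0"
    proof (rule antisym)
      show "T y q 0 \<le> 0" using T_below[OF q, of y 0] sublin_0[OF q] by simp
      show "0 \<le> T y q 0" unfolding T_def
        by (rule cINF_greatest) (auto simp: sublin_hom[OF q])
    qed
    then show ?thesis using True by simp
  next
    case False
    then have cp: "c > 0" using c by simp
    show ?thesis
    proof (rule antisym)
      have "T y q (scale c x) / c \<le> T y q x" unfolding T_def[of y q x]
      proof (rule cINF_greatest)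
        fix s :: real assume "s \<in> {0..}"
        then have s: "s \<ge> 0" by simp
        have "T y q (scale c x) \<le> q (scale c x + scale (c * s) y) - (c * s) * q y"
          using T_le[OF q] s c by simp
        also have "scale c x + scale (c * s) y = scale c (x + scale s y)"
          by (simp add: scale_right_distrib scale_scale)
        also have "q \<dots> = c * q (x + scale s y)" by (rule sublin_hom[OF q c])
        finally have "T y q (scale c x) \<le> c * (q (x + scale s y) - s * q y)"
          by (simp add: algebra_simps)
        then show "T y q (scale c x) / c \<le> q (x + scale s y) - s * q y"
          using cp by (simp add: divide_le_eq mult.commute)
      qed auto
      then show "T y q (scale c x) \<le> c * T y q x" using cp by (simp add: divide_le_eq mult.commute)
    next
      show "c * T y q x \<le> T y q (scale c x)" unfolding T_def[of y q "scale c x"]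
      proof (rule cINF_greatest)
        fix t :: real assume "t \<in> {0..}"
        then have t: "t \<ge> 0" by simp
        have "T y q x \<le> q (x + scale (t / c) y) - (t / c) * q y"
          using T_le[OF q, of "t / c" y x] t cp by simp
        then have "c * T y q x \<le> c * (q (x + scale (t / c) y) - (t / c) * q y)"
          using cp by simp
        also have "\<dots> = q (scale c (x + scale (t / c) y)) - t * q y"
          using cp by (subst sublin_hom[OF q c]) (simp_all add: algebra_simps)
        also have "scale c (x + scale (t / c) y) = scale c x + scale t y"
          using cp by (simp add: scale_right_distrib scale_scale)
        finally show "c * T y q x \<le> q (scale c x + scale t y) - t * q y" .
      qed auto
    qed
  qed
qed

definition rlin :: "('b \<Rightarrow> real) \<Rightarrow> bool" where
  "rlin g \<longleftrightarrow> (\<forall>x y. g (x + y) = g x + g y) \<and> (\<forall>c x. g (scale c x) = c * g x)"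

lemma minimal_linear:
  assumes m: "sublin m" and min: "\<And>r. sublin r \<Longrightarrow> (\<forall>x. r x \<le> m x) \<Longrightarrow> r = m"
  shows "rlin m"
proof -
  have odd: "m (- y) = - m y" for y
  proof -
    have "T y m = m" by (rule min[OF T_sublin[OF m]]) (use T_below[OF m] in blast)
    then have "m (- y) \<le> - m y" using T_neg[OF m, of y] by simp
    moreover have "- m y \<le> m (- y)" using sublin_neg[OF m, of "- y"] by simp
    ultimately show ?thesis by simp
  qed
  have add: "m (x + y) = m x + m y" for x y
  proof (rule antisym)
    show "m (x + y) \<le> m x + m y" by (rule sublin_add[OF m])
    have "m x \<le> m (x + y) + m (- y)" using sublin_add[OF m, of "x + y" "- y"] by simp
    then show "m x + m y \<le> m (x + y)" using odd[of y] by simp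
  qed
  have hom: "m (scale c x) = c * m x" for c x
  proof (cases "c \<ge> 0")
    case True then show ?thesis by (rule sublin_hom[OF m])
  next
    case False
    then have "m (scale (- c) x) = (- c) * m x" using sublin_hom[OF m, of "- c" x] by simp
    then show ?thesis using odd[of "scale c x"] by simp
  qed
  show ?thesis unfolding rlin_def using add hom by blast
qed

lemma exists_linear_below:
  assumes q: "sublin q"
  shows "\<exists>g. rlin g \<and> (\<forall>x. g x \<le> q x)"
proof -
  let ?A = "{r. sublin r \<and> (\<forall>x. r x \<le> q x)}"
  let ?P = "\<lambda>a b. \<forall>x. b x \<le> (a x :: real)"
  have po: "partial_order_on ?A (relation_of ?P ?A)"
    unfolding partial_order_on_def preorder_on_def refl_on_def trans_on_def antisym_on_def relation_of_def
    by (auto intro: order_trans) (meson antisym ext)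
  have ch: "\<exists>u\<in>?A. \<forall>a\<in>C. ?P a u" if C: "C \<in> Chains (relation_of ?P ?A)" for C
  proof (cases "C = {}")
    case True then show ?thesis using q by auto
  next
    case False
    have CA: "C \<subseteq> ?A" using C False unfolding Chains_def relation_of_def by auto
    have tot: "?P a b \<or> ?P b a" if "a \<in> C" "b \<in> C" for a b
      using C that unfolding Chains_def relation_of_def by auto
    define u where "u x = (INF r\<in>C. r x)" for x
    have bdd: "bdd_below ((\<lambda>r. r x) ` C)" for x
    proof (rule bdd_belowI2)
      fix r assume "r \<in> C"
      then have "sublin r" "\<forall>x. r x \<le> q x" using CA by auto
      then show "- q (- x) \<le> r x" using sublin_neg[of r x] by (meson neg_le_iff_le order_trans)
    qed
    have ule: "u x \<le> r x" if "r \<in> C" for r x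
      unfolding u_def by (rule cINF_lower[OF bdd that])
    have uge: "b \<le> u x" if "\<And>r. r \<in> C \<Longrightarrow> b \<le> r x" for b x
      unfolding u_def using False that by (intro cINF_greatest) auto
    have subl: "sublin u" unfolding sublin_def
    proof (intro conjI allI impI)
      fix x y
      have "u (x + y) - r2 y \<le> r1 x" if r1: "r1 \<in> C" and r2: "r2 \<in> C" for r1 r2
      proof -
        have s1: "sublin r1" and s2: "sublin r2" using CA r1 r2 by auto
        from tot[OF r1 r2] show ?thesis
        proof
          assume "?P r1 r2"
          then have "u (x + y) \<le> r2 x + r2 y" using ule[OF r2] sublin_add[OF s2] by (meson order_trans)
          then show ?thesis using \<open>?P r1 r2\<close>[rule_format, of x] by linarith
        next
          assume "?P r2 r1"
          then have "u (x + y) \<le> r1 x + r1 y" using ule[OF r1] sublin_add[OF s1] by (meson order_trans)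
          then show ?thesis using \<open>?P r2 r1\<close>[rule_format, of y] by linarith
        qed
      qed
      then have A: "u (x + y) - r2 y \<le> u x" if "r2 \<in> C" for r2 using uge that by blast
      have "u (x + y) - u x \<le> u y"
      proof (rule uge)
        fix r assume "r \<in> C" then show "u (x + y) - u x \<le> r y" using A[of r] by linarith
      qed
      then show "u (x + y) \<le> u x + u y" by simp
    next
      fix c :: real and x assume c: "c \<ge> 0"
      show "u (scale c x) = c * u x"
      proof (cases "c = 0")
        case True
        have "u 0 = 0"
        proof (rule antisym)
          obtain r where "r \<in> C" using False by blast
          then show "u 0 \<le> 0" using ule[of r 0] sublin_0[of r] CA by auto
          show "0 \<le> u 0" by (rule uge) (use CA sublin_0 in fastforce)
        qed
        then show ?thesis using True by simp
      next
        case False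
        then have cp: "c > 0" using c by simp
        have hr: "r (scale c x) = c * r x" if "r \<in> C" for r using that CA sublin_hom[OF _ c] by auto
        show ?thesis
        proof (rule antisym)
          have "u (scale c x) / c \<le> u x"
            by (rule uge) (use ule hr cp in \<open>auto simp: divide_le_eq mult.commute\<close>)
          then show "u (scale c x) \<le> c * u x" using cp by (simp add: divide_le_eq mult.commute)
          show "c * u x \<le> u (scale c x)"
          proof (rule uge)
            fix r assume r: "r \<in> C"
            show "c * u x \<le> r (scale c x)" using hr[OF r] ule[OF r, of x] cp by (simp add: mult_left_mono)
          qed
        qed
      qed
    qed
    obtain r0 where r0: "r0 \<in> C" using False by blast
    have "\<forall>x. u x \<le> q x"
    proof
      fix x have "r0 x \<le> q x" using CA r0 by auto
      then show "u x \<le> q x" using ule[OF r0, of x] by linarith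
    qed
    then have "u \<in> ?A" using subl by simp
    then show ?thesis using ule by blast
  qed
  obtain m where mA: "m \<in> ?A" and mmax: "\<forall>a\<in>?A. ?P m a \<longrightarrow> a = m"
    using predicate_Zorn[OF po ch] by blast
  have "rlin m"
  proof (rule minimal_linear)
    show "sublin m" using mA by simp
    fix r assume r: "sublin r" "\<forall>x. r x \<le> m x"
    have "\<forall>x. r x \<le> q x"
    proof
      fix x have "m x \<le> q x" using mA by simp
      then show "r x \<le> q x" using r(2)[rule_format, of x] by linarith
    qed
    then have "r \<in> ?A" using r(1) by simp
    then show "r = m" using mmax r(2) by blast
  qed
  then show ?thesis using mA by auto
qed

theorem hahn_banach_point:
  assumes q: "sublin q"
  shows "\<exists>g. rlin g \<and> (\<forall>x. g x \<le> q x) \<and> g h = q h"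
proof -
  obtain g where g: "rlin g" "\<forall>x. g x \<le> T h q x"
    using exists_linear_below[OF T_sublin[OF q]] by blast
  have "g (scale (-1) h) = (-1) * g h" using g(1) unfolding rlin_def by blast
  then have gm: "g (- h) = - g h" by simp
  have gq: "g x \<le> q x" for x using g(2)[rule_format, of x] T_below[OF q, of h x] by linarith
  have "g (- h) \<le> - q h" using g(2)[rule_format, of "- h"] T_neg[OF q, of h] by linarith
  then have "g h = q h" using gm gq[of h] by linarith
  then show ?thesis using g(1) gq by blast
qed

end




definition sqs :: "('j \<Rightarrow> complex) \<Rightarrow> bool" where
  "sqs x \<longleftrightarrow> (\<lambda>j. (cmod (x j))\<^sup>2) summable_on UNIV"

definition lip :: "('j \<Rightarrow> complex) \<Rightarrow> ('j \<Rightarrow> complex) \<Rightarrow> complex" where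
  "lip x y = infsum (\<lambda>j. x j * cnj (y j)) UNIV"

lemma sq_real_aux: fixes x y :: real shows "(x + y)\<^sup>2 \<le> 2 * x\<^sup>2 + 2 * y\<^sup>2" and "x\<^sup>2 + y\<^sup>2 - 2 * (x * y) = (x - y)\<^sup>2"
proof -
  show e: "x\<^sup>2 + y\<^sup>2 - 2 * (x * y) = (x - y)\<^sup>2" by (simp add: power2_eq_square algebra_simps)
  have e2: "2 * x\<^sup>2 + 2 * y\<^sup>2 - (x + y)\<^sup>2 = (x - y)\<^sup>2" by (simp add: power2_eq_square algebra_simps)
  have "0 \<le> (x - y)\<^sup>2" by simp
  then show "(x + y)\<^sup>2 \<le> 2 * x\<^sup>2 + 2 * y\<^sup>2" using e2 by linarith
qed

lemma sq_add_le: "(cmod (a + b))\<^sup>2 \<le> 2 * (cmod a)\<^sup>2 + 2 * (cmod b)\<^sup>2"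
proof -
  have "cmod (a+b) \<le> cmod a + cmod b" by (rule norm_triangle_ineq)
  hence "(cmod (a+b))\<^sup>2 \<le> (cmod a + cmod b)\<^sup>2" by (simp add: power_mono)
  also have "\<dots> \<le> 2 * (cmod a)\<^sup>2 + 2 * (cmod b)\<^sup>2"
    by (rule sq_real_aux(1))
  finally show ?thesis .
qed

lemma sqs_add: assumes "sqs x" "sqs y" shows "sqs (\<lambda>j. x j + y j)"
  unfolding sqs_def
proof (rule summable_on_comparison_test)
  show "(\<lambda>j. 2 * (cmod (x j))\<^sup>2 + 2 * (cmod (y j))\<^sup>2) summable_on UNIV"
    using assms unfolding sqs_def by (intro summable_on_add summable_on_cmult_right)
qed (auto simp: sq_add_le)

lemma sqs_scale: assumes "sqs x" shows "sqs (\<lambda>j. c * x j)"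
  using summable_on_cmult_right[OF assms[unfolded sqs_def], of "(cmod c)\<^sup>2"]
  unfolding sqs_def by (simp add: norm_mult power_mult_distrib)

lemma sqs_minus: assumes "sqs x" shows "sqs (\<lambda>j. - x j)"
  using assms unfolding sqs_def by simp

lemma sqs_diff: assumes "sqs x" "sqs y" shows "sqs (\<lambda>j. x j - y j)"
  using sqs_add[OF assms(1) sqs_minus[OF assms(2)]] by simp

lemma prod_summable: assumes "sqs x" "sqs y"
  shows "(\<lambda>j. x j * cnj (y j)) summable_on UNIV"
proof -
  have "(\<lambda>j. norm (x j * cnj (y j))) summable_on UNIV"
  proof (rule summable_on_comparison_test)
    show "(\<lambda>j. (cmod (x j))\<^sup>2 + (cmod (y j))\<^sup>2) summable_on UNIV"
      using assms unfolding sqs_def by (intro summable_on_add)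
    fix j
    have "cmod (x j) * cmod (y j) \<le> (cmod (x j))\<^sup>2 + (cmod (y j))\<^sup>2"
    proof -
      have "0 \<le> (cmod (x j) - cmod (y j))\<^sup>2" by simp
      moreover have "0 \<le> cmod (x j) * cmod (y j)" by simp
      ultimately show ?thesis using sq_real_aux(2)[of "cmod (x j)" "cmod (y j)"] by linarith
    qed
    then show "norm (x j * cnj (y j)) \<le> (cmod (x j))\<^sup>2 + (cmod (y j))\<^sup>2"
      by (simp add: norm_mult)
  qed auto
  then show ?thesis by (rule abs_summable_summable)
qed

lemma infsum_of_real': assumes "f summable_on A"
  shows "infsum (\<lambda>x. complex_of_real (f x)) A = of_real (infsum f A)"
  by (rule infsumI[OF has_sum_of_real[OF has_sum_infsum[OF assms]]])

lemma lip_self: assumes "sqs x" shows "lip x x = of_real (infsum (\<lambda>j. (cmod (x j))\<^sup>2) UNIV)"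
proof -
  have "lip x x = infsum (\<lambda>j. complex_of_real ((cmod (x j))\<^sup>2)) UNIV"
    unfolding lip_def by (rule infsum_cong) (rule complex_norm_square[symmetric])
  also have "\<dots> = of_real (infsum (\<lambda>j. (cmod (x j))\<^sup>2) UNIV)"
    using assms unfolding sqs_def by (rule infsum_of_real')
  finally show ?thesis .
qed

lemma hnorm_lip: assumes "sqs x" shows "hnorm lip x = sqrt (infsum (\<lambda>j. (cmod (x j))\<^sup>2) UNIV)"
  using lip_self[OF assms] by (simp add: hnorm_def)

lemma coord_le: assumes "sqs x" shows "(cmod (x j))\<^sup>2 \<le> infsum (\<lambda>j. (cmod (x j))\<^sup>2) UNIV"
proof -
  have "(cmod (x j))\<^sup>2 = infsum (\<lambda>j. (cmod (x j))\<^sup>2) {j}" by simp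
  also have "\<dots> \<le> infsum (\<lambda>j. (cmod (x j))\<^sup>2) UNIV"
    using assms unfolding sqs_def by (intro infsum_mono_neutral) auto
  finally show ?thesis .
qed

lemma coord_le_hnorm: assumes "sqs x" shows "cmod (x j) \<le> hnorm lip x"
  unfolding hnorm_lip[OF assms] using coord_le[OF assms, of j] real_le_rsqrt by blast

lemma sqs_zero: "sqs (\<lambda>_. 0)" by (simp add: sqs_def)

lemma hnorm_sq_lt: assumes "sqs x" "hnorm lip x < e"
  shows "infsum (\<lambda>j. (cmod (x j))\<^sup>2) UNIV < e\<^sup>2"
proof -
  let ?s = "infsum (\<lambda>j. (cmod (x j))\<^sup>2) UNIV"
  have s0: "?s \<ge> 0" by (rule infsum_nonneg) simp
  have se: "sqrt ?s < e" using assms hnorm_lip[OF assms(1)] by simp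
  have e0: "0 < e" using se real_sqrt_ge_zero[OF s0] by linarith
  have "sqrt ?s < sqrt (e\<^sup>2)" using se e0 by simp
  then show ?thesis by (simp only: real_sqrt_less_iff)
qed

lemma l2_complete:
  fixes X :: "nat \<Rightarrow> 'j \<Rightarrow> complex"
  assumes X: "\<forall>k. sqs (X k)"
    and C: "\<forall>e>0. \<exists>N. \<forall>k\<ge>N. \<forall>l\<ge>N. hnorm lip (\<lambda>j. X k j - X l j) < e"
  shows "\<exists>L. sqs L \<and> (\<lambda>k. hnorm lip (\<lambda>j. X k j - L j)) \<longlonglongrightarrow> 0"
proof -
  have cau: "Cauchy (\<lambda>k. X k j)" for j
  proof (rule metric_CauchyI)
    fix e :: real assume "e > 0"
    then obtain N where N: "\<forall>k\<ge>N. \<forall>l\<ge>N. hnorm lip (\<lambda>j. X k j - X l j) < e" using C by blast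
    show "\<exists>M. \<forall>m\<ge>M. \<forall>n\<ge>M. dist (X m j) (X n j) < e"
    proof (intro exI allI impI)
      fix m n assume "m \<ge> N" "n \<ge> N"
      then have "hnorm lip (\<lambda>j. X m j - X n j) < e" using N by blast
      moreover have "cmod (X m j - X n j) \<le> hnorm lip (\<lambda>j. X m j - X n j)"
        using coord_le_hnorm[OF sqs_diff[OF X[rule_format, of m] X[rule_format, of n]], of j] by simp
      ultimately show "dist (X m j) (X n j) < e" by (simp add: dist_norm)
    qed
  qed
  define L where "L j = lim (\<lambda>k. X k j)" for j
  have conv: "(\<lambda>k. X k j) \<longlonglongrightarrow> L j" for j
    using cau[of j] unfolding L_def by (simp add: Cauchy_convergent_iff convergent_LIMSEQ_iff)
  have claim: "\<exists>N. \<forall>k\<ge>N. sqs (\<lambda>j. X k j - L j) \<and>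
      infsum (\<lambda>j. (cmod (X k j - L j))\<^sup>2) UNIV \<le> e\<^sup>2" if e: "e > 0" for e
  proof -
    obtain N where N: "\<forall>k\<ge>N. \<forall>l\<ge>N. hnorm lip (\<lambda>j. X k j - X l j) < e" using C e by blast
    show ?thesis
    proof (intro exI allI impI)
      fix k assume k: "k \<ge> N"
      have fin: "(\<Sum>j\<in>F. (cmod (X k j - L j))\<^sup>2) \<le> e\<^sup>2" if "finite F" for F
      proof -
        have lim: "(\<lambda>l. \<Sum>j\<in>F. (cmod (X k j - X l j))\<^sup>2) \<longlonglongrightarrow> (\<Sum>j\<in>F. (cmod (X k j - L j))\<^sup>2)"
          by (intro tendsto_sum tendsto_power tendsto_norm tendsto_diff tendsto_const conv)
        have "(\<Sum>j\<in>F. (cmod (X k j - X l j))\<^sup>2) \<le> e\<^sup>2" if l: "l \<ge> N" for l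
        proof -
          have sq: "sqs (\<lambda>j. X k j - X l j)" by (rule sqs_diff) (use X in auto)
          have "(\<Sum>j\<in>F. (cmod (X k j - X l j))\<^sup>2) = infsum (\<lambda>j. (cmod (X k j - X l j))\<^sup>2) F"
            using \<open>finite F\<close> by simp
          also have "\<dots> \<le> infsum (\<lambda>j. (cmod (X k j - X l j))\<^sup>2) UNIV"
            using sq \<open>finite F\<close> unfolding sqs_def by (intro infsum_mono_neutral) auto
          also have "\<dots> < e\<^sup>2" using hnorm_sq_lt[OF sq] N k l by blast
          finally show ?thesis by simp
        qed
        then show ?thesis using lim by (intro Lim_bounded[where M=N]) auto
      qed
      have summ: "(\<lambda>j. (cmod (X k j - L j))\<^sup>2) summable_on UNIV"
        by (rule nonneg_bdd_above_summable_on) (use fin in \<open>auto intro!: bdd_aboveI\<close>)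
      show "sqs (\<lambda>j. X k j - L j) \<and> infsum (\<lambda>j. (cmod (X k j - L j))\<^sup>2) UNIV \<le> e\<^sup>2"
        using summ fin unfolding sqs_def by (auto intro: infsum_le_finite_sums)
    qed
  qed
  obtain N1 where "sqs (\<lambda>j. X N1 j - L j)" using claim[of 1] by auto
  from sqs_diff[OF X[rule_format, of N1] this] have sL: "sqs L" by simp
  have "(\<lambda>k. hnorm lip (\<lambda>j. X k j - L j)) \<longlonglongrightarrow> 0"
  proof (rule LIMSEQ_I)
    fix r :: real assume r: "r > 0"
    obtain N where N: "\<forall>k\<ge>N. sqs (\<lambda>j. X k j - L j) \<and>
      infsum (\<lambda>j. (cmod (X k j - L j))\<^sup>2) UNIV \<le> (r/2)\<^sup>2" using claim[of "r/2"] r by auto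
    show "\<exists>no. \<forall>n\<ge>no. norm (hnorm lip (\<lambda>j. X n j - L j) - 0) < r"
    proof (intro exI allI impI)
      fix n assume "n \<ge> N"
      then have a: "sqs (\<lambda>j. X n j - L j)" and b: "infsum (\<lambda>j. (cmod (X n j - L j))\<^sup>2) UNIV \<le> (r/2)\<^sup>2"
        using N by auto
      have "hnorm lip (\<lambda>j. X n j - L j) \<le> sqrt ((r/2)\<^sup>2)"
        unfolding hnorm_lip[OF a] using b real_sqrt_le_mono by blast
      also have "\<dots> = r/2" using r by simp
      finally have "hnorm lip (\<lambda>j. X n j - L j) \<le> r/2" .
      moreover have "hnorm lip (\<lambda>j. X n j - L j) \<ge> 0" unfolding hnorm_lip[OF a] by (simp add: infsum_nonneg)
      ultimately show "norm (hnorm lip (\<lambda>j. X n j - L j) - 0) < r" using r by simp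
    qed
  qed
  with sL show ?thesis by blast
qed

lemma l2_hilbert: "hilbert_space (Collect sqs :: ('j \<Rightarrow> complex) set) lip"
  unfolding hilbert_space_def Ball_def Bex_def mem_Collect_eq
proof (intro conjI allI impI)
  show "sqs (\<lambda>_. 0)" by (rule sqs_zero)
next
  fix x y :: "'j \<Rightarrow> complex" assume "sqs x" "sqs y" then show "sqs (\<lambda>j. x j + y j)" by (rule sqs_add)
next
  fix c and x :: "'j \<Rightarrow> complex" assume "sqs x" then show "sqs (\<lambda>j. c * x j)" by (rule sqs_scale)
next
  fix x y z :: "'j \<Rightarrow> complex" assume a: "sqs x" "sqs y" "sqs z"
  show "lip (\<lambda>j. x j + y j) z = lip x z + lip y z"
    unfolding lip_def using prod_summable[OF a(1,3)] prod_summable[OF a(2,3)]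
    by (simp add: distrib_right infsum_add)
next
  fix c and x y :: "'j \<Rightarrow> complex" assume a: "sqs x" "sqs y"
  show "lip (\<lambda>j. c * x j) y = c * lip x y"
    unfolding lip_def using prod_summable[OF a]
    by (simp add: mult.assoc infsum_cmult_right)
next
  fix x y :: "'j \<Rightarrow> complex" assume a: "sqs x" "sqs y"
  have "cnj (lip x y) = infsum (\<lambda>j. cnj (x j * cnj (y j))) UNIV"
    unfolding lip_def by (rule infsum_cnj[symmetric])
  also have "\<dots> = lip y x" unfolding lip_def by (simp add: mult.commute)
  finally show "lip y x = cnj (lip x y)" by simp
next
  fix x :: "'j \<Rightarrow> complex" assume a: "sqs x"
  have s0: "infsum (\<lambda>j. (cmod (x j))\<^sup>2) UNIV \<ge> 0" by (rule infsum_nonneg) simp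
  show "0 \<le> Re (lip x x)" using lip_self[OF a] s0 by simp
  show "(lip x x = 0) = (x = (\<lambda>_. 0))"
  proof
    assume "lip x x = 0"
    then have z: "infsum (\<lambda>j. (cmod (x j))\<^sup>2) UNIV = 0" using lip_self[OF a] by simp
    show "x = (\<lambda>_. 0)"
    proof
      fix j show "x j = 0" using coord_le[OF a, of j] z by simp
    qed
  next
    assume "x = (\<lambda>_. 0)" then show "lip x x = 0" by (simp add: lip_def)
  qed
next
  fix X :: "nat \<Rightarrow> 'j \<Rightarrow> complex"
  assume "\<forall>k. sqs (X k)" "\<forall>e>0. \<exists>N. \<forall>k\<ge>N. \<forall>l\<ge>N. hnorm lip (\<lambda>j. X k j - X l j) < e"
  from l2_complete[OF this] show "\<exists>L. sqs L \<and> (\<lambda>k. hnorm lip (\<lambda>j. X k j - L j)) \<longlonglongrightarrow> 0" .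
qed





locale msetup = V: vector_space smul for smul :: "complex \<Rightarrow> 'v::ab_group_add \<Rightarrow> 'v" +
  fixes st :: "'v \<Rightarrow> 'v" and sn :: "nat \<Rightarrow> 'v mat \<Rightarrow> real" and n :: nat
  assumes inv: "antilinear_involution smul st"
    and nrm: "is_norm_on smul (mats n n) (sn n)"
    and stinv: "\<forall>x\<in>mats n n. sn n (mstar st x) = sn n x"
begin

lemma st_add: "st (u + v) = st u + st v" using inv unfolding antilinear_involution_def by blast
lemma st_smul: "st (smul c v) = smul (cnj c) (st v)" using inv unfolding antilinear_involution_def by blast
lemma st_st: "st (st v) = v" using inv unfolding antilinear_involution_def by blast
lemma st_0: "st 0 = 0" using st_add[of 0 0] by simp
lemma st_minus: "st (- v) = - st v"
proof -
  have "st v + st (- v) = 0" using st_add[of v "- v"] st_0 by simp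
  then show ?thesis by (metis add.inverse_unique)
qed
lemma st_diff: "st (u - v) = st u - st v" using st_add[of u "- v"] st_minus by simp

lemma sn_nonneg: "x \<in> mats n n \<Longrightarrow> 0 \<le> sn n x" using nrm unfolding is_norm_on_def by blast
lemma sn_zero: "sn n (\<lambda>i j. 0) = 0"
  using nrm unfolding is_norm_on_def by (auto simp: mats_def)
lemma sn_tri: "x \<in> mats n n \<Longrightarrow> y \<in> mats n n \<Longrightarrow> sn n (madd x y) \<le> sn n x + sn n y"
  using nrm unfolding is_norm_on_def by blast
lemma sn_scale: "x \<in> mats n n \<Longrightarrow> sn n (mscale smul c x) = cmod c * sn n x"
  using nrm unfolding is_norm_on_def by blast

lemma mats_madd: "(x::'v mat) \<in> mats n n \<Longrightarrow> y \<in> mats n n \<Longrightarrow> madd x y \<in> mats n n"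
  by (auto simp: mats_def madd_def)

lemma neg_fun: "- (x::'v mat) = (\<lambda>i j. - x i j)" by (simp add: fun_eq_iff)
lemma mats_mscale: "x \<in> mats n n \<Longrightarrow> mscale smul c x \<in> mats n n"
  by (simp add: mats_def mscale_def)
lemma mats_mstar: "x \<in> mats n n \<Longrightarrow> mstar st x \<in> mats n n"
  by (auto simp: mats_def mstar_def st_0)

definition rs :: "real \<Rightarrow> 'v mat \<Rightarrow> 'v mat" where
  "rs r x = mscale smul (complex_of_real r) x"

lemma madd_plus: "madd x y = x + y" by (simp add: madd_def fun_eq_iff)

lemma rvs_rs: "rvs rs"
  unfolding rvs_def vector_space_def rs_def mscale_def
  by (simp add: fun_eq_iff V.scale_right_distrib V.scale_left_distrib V.scale_scale)

definition hp :: "'v mat \<Rightarrow> 'v mat" where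
  "hp x = (\<lambda>i j. if i < n \<and> j < n then smul (1/2) (x i j + st (x j i)) else 0)"

definition p :: "'v mat \<Rightarrow> real" where "p x = sn n (hp x)"

lemma hp_mats: "hp x \<in> mats n n" by (simp add: mats_def hp_def)

lemma hp_add: "hp (x + y) = madd (hp x) (hp y)"
  by (simp add: hp_def madd_def fun_eq_iff st_add V.scale_right_distrib[symmetric] add_ac)

lemma hp_rs: "hp (rs r x) = mscale smul (complex_of_real r) (hp x)"
  by (simp add: hp_def rs_def mscale_def fun_eq_iff st_smul V.scale_right_distrib V.scale_left_commute)

lemma hp_minus: "hp (- x) = mscale smul (-1) (hp x)"
  using hp_rs[of "-1" x] by (simp add: rs_def mscale_def neg_fun)

lemma p_sublin: "rvs.sublin rs p"
  unfolding rvs.sublin_def[OF rvs_rs]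
proof (intro conjI allI impI)
  fix x y show "p (x + y) \<le> p x + p y"
    unfolding p_def hp_add by (rule sn_tri[OF hp_mats hp_mats])
next
  fix c :: real and x assume "0 \<le> c"
  then show "p (rs c x) = c * p x"
    unfolding p_def hp_rs by (simp add: sn_scale[OF hp_mats])
qed

lemma rlin_add: "rvs.rlin rs g \<Longrightarrow> g (x + y) = g x + g y"
  unfolding rvs.rlin_def[OF rvs_rs] by blast
lemma rlin_rs: "rvs.rlin rs g \<Longrightarrow> g (rs c x) = c * g x"
  unfolding rvs.rlin_def[OF rvs_rs] by blast
lemma rlin_minus: "rvs.rlin rs g \<Longrightarrow> g (- x) = - g x"
  using rlin_rs[of g "-1" x] by (simp add: rs_def mscale_def neg_fun)

lemma zero_hp:
  assumes g: "rvs.rlin rs g" "\<forall>x. g x \<le> p x" and z: "hp z = (\<lambda>i j. 0)"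
  shows "g z = 0"
proof -
  have "hp (- z) = (\<lambda>i j. 0)" using z by (simp add: hp_minus mscale_def)
  then have "g (- z) \<le> 0" "g z \<le> 0" using g(2)[rule_format, of z] g(2)[rule_format, of "- z"] z sn_zero unfolding p_def by simp_all
  then show ?thesis using rlin_minus[OF g(1)] by simp
qed

lemma mscale_decomp: "mscale smul c x = rs (Re c) x + rs (Im c) (mscale smul \<i> x)"
proof -
  have "smul c v = smul (complex_of_real (Re c)) v + smul (complex_of_real (Im c)) (smul \<i> v)" for v
  proof -
    have ceq: "complex_of_real (Re c) + complex_of_real (Im c) * \<i> = c" by (simp add: complex_eq_iff)
    have "smul c v = smul (complex_of_real (Re c) + complex_of_real (Im c) * \<i>) v" by (simp only: ceq)
    then show ?thesis by (simp only: V.scale_left_distrib V.scale_scale)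
  qed
  then show ?thesis by (simp add: rs_def mscale_def fun_eq_iff)
qed

definition fofg :: "('v mat \<Rightarrow> real) \<Rightarrow> 'v mat \<Rightarrow> complex" where
  "fofg g x = complex_of_real (g x) - \<i> * complex_of_real (g (mscale smul \<i> x))"

lemma ii: "mscale smul \<i> (mscale smul \<i> x) = - x"
  by (simp add: mscale_def fun_eq_iff V.scale_scale)

lemma iscale_comm: "mscale smul \<i> (mscale smul c x) = mscale smul c (mscale smul \<i> x)"
  by (simp add: mscale_def fun_eq_iff V.scale_left_commute)

lemma mscale_add: "mscale smul c (x + y) = mscale smul c x + mscale smul c y"
  by (simp add: mscale_def fun_eq_iff V.scale_right_distrib)

lemma f_add: "rvs.rlin rs g \<Longrightarrow> fofg g (x + y) = fofg g x + fofg g y"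
  by (simp add: fofg_def mscale_add rlin_add algebra_simps)

lemma g_decomp: "rvs.rlin rs g \<Longrightarrow> g (mscale smul c x) = Re c * g x + Im c * g (mscale smul \<i> x)"
  by (subst mscale_decomp) (simp add: rlin_add rlin_rs)

lemma f_scale: assumes g: "rvs.rlin rs g" shows "fofg g (mscale smul c x) = c * fofg g x"
proof -
  have a: "g (mscale smul \<i> (mscale smul c x)) = Re c * g (mscale smul \<i> x) - Im c * g x"
  proof -
    have "g (mscale smul \<i> (mscale smul c x)) = g (mscale smul c (mscale smul \<i> x))"
      by (rule arg_cong[where f=g], rule iscale_comm)
    also have "\<dots> = Re c * g (mscale smul \<i> x) + Im c * g (mscale smul \<i> (mscale smul \<i> x))"
      by (rule g_decomp[OF g])
    also have "g (mscale smul \<i> (mscale smul \<i> x)) = - g x"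
      using ii[of x] rlin_minus[OF g, of x] by simp
    finally show ?thesis by simp
  qed
  have alg: "(complex_of_real a + \<i> * complex_of_real b) * (complex_of_real A - \<i> * complex_of_real B)
     = complex_of_real (a * A + b * B) - \<i> * complex_of_real (a * B - b * A)" for a b A B :: real
    by (simp add: complex_eq_iff)
  have ceq: "complex_of_real (Re c) + \<i> * complex_of_real (Im c) = c" by (simp add: complex_eq_iff)
  have "c * fofg g x = (complex_of_real (Re c) + \<i> * complex_of_real (Im c)) * fofg g x"
    by (simp only: ceq)
  also have "\<dots> = fofg g (mscale smul c x)"
    unfolding fofg_def a g_decomp[OF g, of c x] alg ..
  finally show ?thesis by simp
qed

lemma hp_star_diff: "hp (x - mstar st x) = (\<lambda>i j. 0)"
  by (simp add: hp_def mstar_def fun_eq_iff st_diff st_st V.scale_right_diff_distrib algebra_simps)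

lemma g_star: assumes g: "rvs.rlin rs g" "\<forall>x. g x \<le> p x" shows "g (mstar st x) = g x"
proof -
  have "g (x - mstar st x) = 0" by (rule zero_hp[OF g hp_star_diff])
  then show ?thesis using rlin_add[OF g(1), of x "- mstar st x"] rlin_minus[OF g(1)] by simp
qed

lemma istar: "mscale smul \<i> (mstar st x) = - mstar st (mscale smul \<i> x)"
  by (simp add: mscale_def mstar_def fun_eq_iff st_smul)

lemma f_star: assumes g: "rvs.rlin rs g" "\<forall>x. g x \<le> p x" shows "fofg g (mstar st x) = cnj (fofg g x)"
proof -
  have "g (mscale smul \<i> (mstar st x)) = - g (mscale smul \<i> x)"
    unfolding istar rlin_minus[OF g(1)] g_star[OF g] ..
  then show ?thesis unfolding fofg_def g_star[OF g] by (simp add: complex_eq_iff)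
qed

lemma hp_mats_eq: "y \<in> mats n n \<Longrightarrow> hp y = mscale smul (1/2) (madd y (mstar st y))"
  by (auto simp: hp_def mscale_def madd_def mstar_def fun_eq_iff mats_def st_0)

lemma p_le: assumes y: "y \<in> mats n n" shows "p y \<le> sn n y"
proof -
  have "p y = (1/2) * sn n (madd y (mstar st y))"
    unfolding p_def hp_mats_eq[OF y] by (simp add: sn_scale mats_madd mats_mstar y)
  also have "\<dots> \<le> (1/2) * (sn n y + sn n (mstar st y))"
    using sn_tri[OF y mats_mstar[OF y]] by simp
  also have "\<dots> = sn n y" using stinv y by simp
  finally show ?thesis .
qed

lemma f_bound: assumes g: "rvs.rlin rs g" "\<forall>x. g x \<le> p x" and x: "x \<in> mats n n"
  shows "cmod (fofg g x) \<le> sn n x"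
proof (cases "fofg g x = 0")
  case True then show ?thesis using sn_nonneg[OF x] by simp
next
  case False
  define u where "u = cnj (fofg g x) / complex_of_real (cmod (fofg g x))"
  have um: "cmod u = 1" using False by (simp add: u_def norm_divide)
  have "fofg g (mscale smul u x) = u * fofg g x" by (rule f_scale[OF g(1)])
  also have "\<dots> = complex_of_real (cmod (fofg g x))"
    using False unfolding u_def by (simp add: complex_norm_square[symmetric] power2_eq_square field_simps)
  finally have "cmod (fofg g x) = Re (fofg g (mscale smul u x))" by simp
  also have "\<dots> = g (mscale smul u x)" by (simp add: fofg_def)
  also have "\<dots> \<le> p (mscale smul u x)" using g(2) by blast
  also have "\<dots> \<le> sn n (mscale smul u x)" by (rule p_le[OF mats_mscale[OF x]])
  also have "\<dots> = sn n x" using sn_scale[OF x] um by simp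
  finally show ?thesis .
qed

lemma herm_hp: assumes x: "x \<in> mats n n" and h: "mstar st x = x" shows "hp x = x"
proof -
  have e: "st (x j i) = x i j" for i j using fun_cong[OF fun_cong[OF h[unfolded mstar_def], of i], of j] by simp
  have "smul (1/2) (v + v) = v" for v
  proof -
    have "smul (1/2) (v + v) = smul (1/2 + 1/2) v" by (simp only: V.scale_right_distrib V.scale_left_distrib)
    then show ?thesis by simp
  qed
  then show ?thesis using x by (auto simp: hp_def e fun_eq_iff mats_def)
qed

lemma herm_hp_i: assumes x: "x \<in> mats n n" and h: "mstar st x = x"
  shows "hp (mscale smul \<i> x) = (\<lambda>i j. 0)"
proof -
  have e: "st (x j i) = x i j" for i j using fun_cong[OF fun_cong[OF h[unfolded mstar_def], of i], of j] by simp
  show ?thesis by (simp add: hp_def mscale_def st_smul e fun_eq_iff)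
qed

lemma exists_functional:
  "\<exists>f. (\<forall>x y. f (madd x y) = f x + f y) \<and> (\<forall>c x. f (mscale smul c x) = c * f x) \<and>
       (\<forall>x. f (mstar st x) = cnj (f x)) \<and> (\<forall>x\<in>mats n n. cmod (f x) \<le> sn n x) \<and>
       (h \<in> mats n n \<longrightarrow> mstar st h = h \<longrightarrow> f h = complex_of_real (sn n h))"
proof -
  obtain g where g: "rvs.rlin rs g" "\<forall>x. g x \<le> p x" "g h = p h"
    using rvs.hahn_banach_point[OF rvs_rs p_sublin] by blast
  have "fofg g h = complex_of_real (sn n h)" if x: "h \<in> mats n n" and hh: "mstar st h = h"
  proof -
    have "g (mscale smul \<i> h) = 0" by (rule zero_hp[OF g(1,2) herm_hp_i[OF x hh]])
    moreover have "g h = sn n h" using g(3) herm_hp[OF x hh] by (simp add: p_def)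
    ultimately show ?thesis by (simp add: fofg_def)
  qed
  then show ?thesis using f_add[OF g(1)] f_scale[OF g(1)] f_star[OF g(1,2)] f_bound[OF g(1,2)]
    by (intro exI[of _ "fofg g"]) (simp add: madd_plus)
qed

end




lemma diag_sqs: assumes c: "\<forall>j. cmod (c j) \<le> K" and x: "sqs x"
  shows "sqs (\<lambda>j. c j * x j)"
  and "infsum (\<lambda>j. (cmod (c j * x j))\<^sup>2) UNIV \<le> K\<^sup>2 * infsum (\<lambda>j. (cmod (x j))\<^sup>2) UNIV"
proof -
  have le: "(cmod (c j * x j))\<^sup>2 \<le> K\<^sup>2 * (cmod (x j))\<^sup>2" for j
  proof -
    have "(cmod (c j))\<^sup>2 \<le> K\<^sup>2" using c by (intro power_mono) auto
    then show ?thesis by (simp add: norm_mult power_mult_distrib mult_right_mono)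
  qed
  have s2: "(\<lambda>j. K\<^sup>2 * (cmod (x j))\<^sup>2) summable_on UNIV"
    using x unfolding sqs_def by (rule summable_on_cmult_right)
  show s: "sqs (\<lambda>j. c j * x j)" unfolding sqs_def
    by (rule summable_on_comparison_test[OF s2]) (use le in auto)
  have "infsum (\<lambda>j. (cmod (c j * x j))\<^sup>2) UNIV \<le> infsum (\<lambda>j. K\<^sup>2 * (cmod (x j))\<^sup>2) UNIV"
    using s s2 le unfolding sqs_def by (intro infsum_mono) auto
  also have "\<dots> = K\<^sup>2 * infsum (\<lambda>j. (cmod (x j))\<^sup>2) UNIV"
    using x unfolding sqs_def by (rule infsum_cmult_right[OF _]) 
  finally show "infsum (\<lambda>j. (cmod (c j * x j))\<^sup>2) UNIV \<le> K\<^sup>2 * infsum (\<lambda>j. (cmod (x j))\<^sup>2) UNIV" .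
qed

lemma diag_hnorm: assumes c: "\<forall>j. cmod (c j) \<le> K" and K: "K \<ge> 0" and x: "sqs x"
  shows "hnorm lip (\<lambda>j. c j * x j) \<le> K * hnorm lip x"
proof -
  have "hnorm lip (\<lambda>j. c j * x j) = sqrt (infsum (\<lambda>j. (cmod (c j * x j))\<^sup>2) UNIV)"
    by (rule hnorm_lip[OF diag_sqs(1)[OF c x]])
  also have "\<dots> \<le> sqrt (K\<^sup>2 * infsum (\<lambda>j. (cmod (x j))\<^sup>2) UNIV)"
    using diag_sqs(2)[OF c x] real_sqrt_le_mono by blast
  also have "\<dots> = K * hnorm lip x" using K by (simp add: hnorm_lip[OF x] real_sqrt_mult)
  finally show ?thesis .
qed

lemma diag_num: assumes c: "\<forall>j. cmod (c j) \<le> K" and x: "sqs x"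
  shows "cmod (lip (\<lambda>j. c j * x j) x) \<le> K * infsum (\<lambda>j. (cmod (x j))\<^sup>2) UNIV"
proof -
  let ?f = "\<lambda>j. c j * x j * cnj (x j)"
  have sf: "?f summable_on UNIV" using prod_summable[OF diag_sqs(1)[OF c x] x] .
  then have af: "(\<lambda>j. norm (?f j)) summable_on UNIV" by (rule summable_on_iff_abs_summable_on_complex[THEN iffD1])
  have s2: "(\<lambda>j. K * (cmod (x j))\<^sup>2) summable_on UNIV"
    using x unfolding sqs_def by (rule summable_on_cmult_right)
  have le: "norm (?f j) \<le> K * (cmod (x j))\<^sup>2" for j
  proof -
    have "cmod (c j) * (cmod (x j) * cmod (x j)) \<le> K * (cmod (x j) * cmod (x j))"
      using c by (intro mult_right_mono) auto
    then show ?thesis by (simp add: norm_mult power2_eq_square mult.assoc)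
  qed
  have "cmod (lip (\<lambda>j. c j * x j) x) \<le> infsum (\<lambda>j. norm (?f j)) UNIV"
    unfolding lip_def by (rule norm_infsum_bound[OF af])
  also have "\<dots> \<le> infsum (\<lambda>j. K * (cmod (x j))\<^sup>2) UNIV"
    using af s2 le by (intro infsum_mono) auto
  also have "\<dots> = K * infsum (\<lambda>j. (cmod (x j))\<^sup>2) UNIV"
    using x unfolding sqs_def by (rule infsum_cmult_right)
  finally show ?thesis .
qed

lemma single_infsum: "infsum (\<lambda>j. if j = j0 then (r::real) else 0) UNIV = r"
  and single_summable: "(\<lambda>j. if j = j0 then (r::real) else 0) summable_on UNIV"
proof -
  have "infsum (\<lambda>j. if j = j0 then r else 0) UNIV = infsum (\<lambda>j. if j = j0 then r else 0) {j0}"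
    by (rule infsum_cong_neutral) auto
  then show "infsum (\<lambda>j. if j = j0 then (r::real) else 0) UNIV = r" by simp
  have "(\<lambda>j. if j = j0 then r else 0) summable_on UNIV \<longleftrightarrow> (\<lambda>j. if j = j0 then r else 0) summable_on {j0}"
    by (rule summable_on_cong_neutral) auto
  then show "(\<lambda>j. if j = j0 then (r::real) else 0) summable_on UNIV" by simp
qed

lemma single_sqs: "sqs (\<lambda>j. if j = j0 then a else 0)"
  and single_hnorm: "hnorm lip (\<lambda>j. if j = j0 then a else 0) = cmod a"
proof -
  have eq: "(\<lambda>j. (cmod (if j = j0 then a else 0))\<^sup>2) = (\<lambda>j. if j = j0 then (cmod a)\<^sup>2 else 0)"
    by auto
  show s: "sqs (\<lambda>j. if j = j0 then a else 0)" unfolding sqs_def eq by (rule single_summable)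
  show "hnorm lip (\<lambda>j. if j = j0 then a else 0) = cmod a"
    unfolding hnorm_lip[OF s] eq single_infsum by simp
qed

theorem mainTheorem7:
  fixes smul :: "complex \<Rightarrow> 'v::ab_group_add \<Rightarrow> 'v"
    and st :: "'v \<Rightarrow> 'v"
    and sn :: "nat \<Rightarrow> 'v mat \<Rightarrow> real"
    and n :: nat
  assumes "h_strong_super_operator_space smul st sn"
  shows "\<exists>(H :: ((('v mat) \<Rightarrow> complex) \<Rightarrow> complex) set) ip
            (\<nu> :: 'v mat \<Rightarrow> (((('v mat) \<Rightarrow> complex) \<Rightarrow> complex) \<Rightarrow> ((('v mat) \<Rightarrow> complex) \<Rightarrow> complex))).
     hilbert_space H ip \<and>
     (\<forall>x\<in>mats n n. bounded_op H ip (\<nu> x)) \<and>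
     (\<forall>x\<in>mats n n. \<forall>y\<in>mats n n. \<forall>\<xi>\<in>H.
        \<nu> (madd x y) \<xi> = (\<lambda>j. \<nu> x \<xi> j + \<nu> y \<xi> j)) \<and>
     (\<forall>c. \<forall>x\<in>mats n n. \<forall>\<xi>\<in>H. \<nu> (mscale smul c x) \<xi> = (\<lambda>j. c * \<nu> x \<xi> j)) \<and>
     (\<forall>x\<in>mats n n. \<forall>\<xi>\<in>H. \<forall>\<eta>\<in>H. ip (\<nu> (mstar st x) \<xi>) \<eta> = ip \<xi> (\<nu> x \<eta>)) \<and>
     (\<forall>x\<in>mats n n. \<forall>\<xi>\<in>H. hnorm ip \<xi> \<le> 1 \<longrightarrow> cmod (ip (\<nu> x \<xi>) \<xi>) \<le> sn n x) \<and>
     (\<forall>x\<in>mats n n. mstar st x = x \<longrightarrow> op_norm H ip (\<nu> x) = sn n x)"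
proof -
  note defs = assms[unfolded h_strong_super_operator_space_def]
  have vs: "vector_space smul" by (rule defs[THEN conjunct1])
  have ai: "antilinear_involution smul st" by (rule defs[THEN conjunct2, THEN conjunct1])
  have smn: "strong_matrix_norm smul sn" by (rule defs[THEN conjunct2, THEN conjunct2, THEN conjunct1])
  have si: "\<forall>n x. x \<in> mats n n \<longrightarrow> sn n (mstar st x) = sn n x"
    by (rule defs[THEN conjunct2, THEN conjunct2, THEN conjunct2, THEN conjunct2, THEN conjunct1])
  have nr: "is_norm_on smul (mats n n) (sn n)"
    using smn[unfolded strong_matrix_norm_def, THEN conjunct1] by (rule spec)
  have si': "\<forall>x\<in>mats n n. sn n (mstar st x) = sn n x" using si by simp
  interpret msetup smul st sn n
    unfolding msetup_def msetup_axioms_def using vs ai nr si' by (intro conjI)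
  let ?P = "\<lambda>h f. (\<forall>x y. f (madd x y) = f x + f y) \<and> (\<forall>c x. f (mscale smul c x) = c * f x) \<and>
       (\<forall>x. f (mstar st x) = cnj (f x)) \<and> (\<forall>x\<in>mats n n. cmod (f x) \<le> sn n x) \<and>
       (h \<in> mats n n \<longrightarrow> mstar st h = h \<longrightarrow> f h = complex_of_real (sn n h))"
  have ex: "\<forall>h. \<exists>f. ?P h f"
  proof
    fix h show "\<exists>f. ?P h f" by (rule exists_functional)
  qed
  define F where "F = (SOME F. \<forall>h. ?P h (F h))"
  have F: "\<forall>h. ?P h (F h)" unfolding F_def by (rule someI_ex[OF choice[OF ex]])
  have Fx: "?P h (F h)" for h using F by (rule spec)
  have Fadd: "F h (madd x y) = F h x + F h y" for h x y
    by (rule Fx[of h, THEN conjunct1, rule_format])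
  have Fscale: "F h (mscale smul c x) = c * F h x" for h c x
    by (rule Fx[of h, THEN conjunct2, THEN conjunct1, rule_format])
  have Fstar: "F h (mstar st x) = cnj (F h x)" for h x
    by (rule Fx[of h, THEN conjunct2, THEN conjunct2, THEN conjunct1, rule_format])
  have Fbd: "x \<in> mats n n \<Longrightarrow> cmod (F h x) \<le> sn n x" for h x
    by (rule Fx[of h, THEN conjunct2, THEN conjunct2, THEN conjunct2, THEN conjunct1, rule_format])
  have Fh: "h \<in> mats n n \<Longrightarrow> mstar st h = h \<Longrightarrow> F h h = complex_of_real (sn n h)" for h
    by (rule Fx[of h, THEN conjunct2, THEN conjunct2, THEN conjunct2, THEN conjunct2, rule_format])
  define e :: "'v mat \<Rightarrow> ('v mat \<Rightarrow> complex)" where "e h = (\<lambda>y. if y = h then 1 else 0)" for h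
  have inje: "inj e"
  proof (rule injI)
    fix a b assume "e a = e b"
    then have "e a a = e b a" by simp
    then show "a = b" unfolding e_def by (cases "a = b") auto
  qed
  define ind where "ind = inv e"
  have ind_e: "ind (e h) = h" for h unfolding ind_def using inje by simp
  define \<nu> :: "'v mat \<Rightarrow> (('v mat \<Rightarrow> complex) \<Rightarrow> complex) \<Rightarrow> (('v mat \<Rightarrow> complex) \<Rightarrow> complex)"
    where "\<nu> x \<xi> = (\<lambda>j. F (ind j) x * \<xi> j)" for x \<xi>
  have cb: "\<forall>j. cmod (F (ind j) x) \<le> sn n x" if "x \<in> mats n n" for x using Fbd[OF that] by blast
  have H: "hilbert_space (Collect sqs) lip" by (rule l2_hilbert)
  show ?thesis
  proof (intro exI[of _ "Collect sqs"] exI[of _ lip] exI[of _ \<nu>] conjI ballI allI impI)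
    show "hilbert_space (Collect sqs) lip" by (rule H)
  next
    fix x :: "'v mat" assume x: "x \<in> mats n n"
    show "bounded_op (Collect sqs) lip (\<nu> x)" unfolding bounded_op_def Ball_def mem_Collect_eq
    proof (intro conjI allI impI exI)
      fix \<xi> :: "('v mat \<Rightarrow> complex) \<Rightarrow> complex" assume "sqs \<xi>" then show "sqs (\<nu> x \<xi>)" unfolding \<nu>_def by (rule diag_sqs(1)[OF cb[OF x]])
    next
      fix \<xi> \<eta> :: "('v mat \<Rightarrow> complex) \<Rightarrow> complex"
      show "\<nu> x (\<lambda>j. \<xi> j + \<eta> j) = (\<lambda>j. \<nu> x \<xi> j + \<nu> x \<eta> j)" by (simp add: \<nu>_def distrib_left)
    next
      fix c and \<xi> :: "('v mat \<Rightarrow> complex) \<Rightarrow> complex"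
      show "\<nu> x (\<lambda>j. c * \<xi> j) = (\<lambda>j. c * \<nu> x \<xi> j)" by (simp add: \<nu>_def mult.left_commute)
    next
      fix \<xi> :: "('v mat \<Rightarrow> complex) \<Rightarrow> complex" assume "sqs \<xi>"
      then show "hnorm lip (\<nu> x \<xi>) \<le> sn n x * hnorm lip \<xi>"
        unfolding \<nu>_def by (rule diag_hnorm[OF cb[OF x] sn_nonneg[OF x]])
    qed
  next
    fix x y :: "'v mat" and \<xi> :: "('v mat \<Rightarrow> complex) \<Rightarrow> complex" assume "x \<in> mats n n" "y \<in> mats n n"
    show "\<nu> (madd x y) \<xi> = (\<lambda>j. \<nu> x \<xi> j + \<nu> y \<xi> j)" by (simp add: \<nu>_def Fadd distrib_right)
  next
    fix c and x :: "'v mat" and \<xi> :: "('v mat \<Rightarrow> complex) \<Rightarrow> complex" assume "x \<in> mats n n"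
    show "\<nu> (mscale smul c x) \<xi> = (\<lambda>j. c * \<nu> x \<xi> j)" by (simp add: \<nu>_def Fscale mult.assoc)
  next
    fix x :: "'v mat" and \<xi> \<eta> :: "('v mat \<Rightarrow> complex) \<Rightarrow> complex" assume "x \<in> mats n n"
    show "lip (\<nu> (mstar st x) \<xi>) \<eta> = lip \<xi> (\<nu> x \<eta>)"
      unfolding lip_def \<nu>_def by (simp add: Fstar mult.commute mult.left_commute)
  next
    fix x :: "'v mat" and \<xi> :: "('v mat \<Rightarrow> complex) \<Rightarrow> complex" assume x: "x \<in> mats n n" and xi: "\<xi> \<in> Collect sqs" and h1: "hnorm lip \<xi> \<le> 1"
    have sx: "sqs \<xi>" using xi by simp
    have s0: "infsum (\<lambda>j. (cmod (\<xi> j))\<^sup>2) UNIV \<ge> 0" by (rule infsum_nonneg) simp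
    have "sqrt (infsum (\<lambda>j. (cmod (\<xi> j))\<^sup>2) UNIV) \<le> 1" using h1 hnorm_lip[OF sx] by simp
    then have s1: "infsum (\<lambda>j. (cmod (\<xi> j))\<^sup>2) UNIV \<le> 1" by simp
    have "cmod (lip (\<nu> x \<xi>) \<xi>) \<le> sn n x * infsum (\<lambda>j. (cmod (\<xi> j))\<^sup>2) UNIV"
      unfolding \<nu>_def by (rule diag_num[OF cb[OF x] sx])
    also have "\<dots> \<le> sn n x" using s1 sn_nonneg[OF x] by (simp add: mult_left_le)
    finally show "cmod (lip (\<nu> x \<xi>) \<xi>) \<le> sn n x" .
  next
    fix x :: "'v mat" assume x: "x \<in> mats n n" and hx: "mstar st x = x"
    show "op_norm (Collect sqs) lip (\<nu> x) = sn n x" unfolding op_norm_def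
    proof (rule cSup_eq_maximum)
      let ?d = "\<lambda>j. if j = e x then (1::complex) else 0"
      have "\<nu> x ?d = (\<lambda>j. if j = e x then F x x else 0)"
      proof
        fix j show "\<nu> x ?d j = (if j = e x then F x x else 0)"
          by (cases "j = e x") (simp_all add: \<nu>_def ind_e)
      qed
      then have "hnorm lip (\<nu> x ?d) = sn n x"
        using single_hnorm[of "e x" "F x x"] Fh[OF x hx] sn_nonneg[OF x] by simp
      moreover have "sqs ?d" by (rule single_sqs)
      moreover have "hnorm lip ?d \<le> 1" using single_hnorm[of "e x" 1] by simp
      ultimately show "sn n x \<in> {hnorm lip (\<nu> x \<xi>) |\<xi>. \<xi> \<in> Collect sqs \<and> hnorm lip \<xi> \<le> 1}"
        unfolding mem_Collect_eq by (intro exI[of _ ?d]) simp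
    next
      fix r assume "r \<in> {hnorm lip (\<nu> x \<xi>) |\<xi>. \<xi> \<in> Collect sqs \<and> hnorm lip \<xi> \<le> 1}"
      then obtain \<xi> where r: "r = hnorm lip (\<nu> x \<xi>)" and xi: "sqs \<xi>" "hnorm lip \<xi> \<le> 1"
        unfolding mem_Collect_eq by blast
      have "r \<le> sn n x * hnorm lip \<xi>"
        unfolding r \<nu>_def by (rule diag_hnorm[OF cb[OF x] sn_nonneg[OF x] xi(1)])
      also have "\<dots> \<le> sn n x" using xi(2) sn_nonneg[OF x] by (simp add: mult_left_le)
      finally show "r \<le> sn n x" .
    qed
  qed
qed


end
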